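(* Let $G$ be a $2K_2$-free graph on $n$ vertices, and let $\alpha(G)$ be its independence number. Then the set $\{x\in V(G) \mid d_G(x)\le \frac{n-\alpha(G)}{2}\}$ is an independent set in $G$.
   Context: All graphs are finite, simple and undirected. A graph is $2K_2$-free if it does not contain $2K_2$ (the graph on four vertices consisting of two independent edges) as an induced subgraph. $d_G(x)$ is the degree of $x$ in $G$ and $\alpha(G)$ is the maximum size of an independent set in $G$. *)

theory Defs
  imports Complex_Main
begin

definition simple_graph :: "'a set \<Rightarrow> ('a \<Rightarrow> 'a \<Rightarrow> bool) \<Rightarrow> bool" where
  "simple_graph V E \<longleftrightarrow> finite V \<and> (\<forall>x y. E x y \<longrightarrow> E y x)
     \<and> (\<forall>x. \<not> E x x) \<and> (\<forall>x y. E x y \<longrightarrow> x \<in> V \<and> y \<in> V)"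

definition independent_set :: "'a set \<Rightarrow> ('a \<Rightarrow> 'a \<Rightarrow> bool) \<Rightarrow> 'a set \<Rightarrow> bool" where
  "independent_set V E S \<longleftrightarrow> S \<subseteq> V \<and> (\<forall>x\<in>S. \<forall>y\<in>S. \<not> E x y)"

definition independence_number :: "'a set \<Rightarrow> ('a \<Rightarrow> 'a \<Rightarrow> bool) \<Rightarrow> nat" where
  "independence_number V E = Max {card S | S. independent_set V E S}"

definition degree :: "'a set \<Rightarrow> ('a \<Rightarrow> 'a \<Rightarrow> bool) \<Rightarrow> 'a \<Rightarrow> nat" where
  "degree V E x = card {y \<in> V. E x y}"

definition two_K2_free :: "'a set \<Rightarrow> ('a \<Rightarrow> 'a \<Rightarrow> bool) \<Rightarrow> bool" where
  "two_K2_free V E \<longleftrightarrow> \<not> (\<exists>a\<in>V. \<exists>b\<in>V. \<exists>c\<in>V. \<exists>d\<in>V.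
     distinct [a, b, c, d] \<and> E a b \<and> E c d \<and>
     \<not> E a c \<and> \<not> E a d \<and> \<not> E b c \<and> \<not> E b d)"

end

theory Submission
  imports Defs
begin

theorem lemma10:
  fixes V :: "'a set" and E :: "'a \<Rightarrow> 'a \<Rightarrow> bool"
  assumes "simple_graph V E" and "two_K2_free V E"
  shows "independent_set V E
    {x \<in> V. real (degree V E x) \<le> (real (card V) - real (independence_number V E)) / 2}"
proof -
  have fin: "finite V" and sym: "\<And>x y. E x y \<Longrightarrow> E y x" and irr: "\<And>x. \<not> E x x"
    and inV: "\<And>x y. E x y \<Longrightarrow> x \<in> V \<and> y \<in> V"
    using assms(1) unfolding simple_graph_def by auto
  let ?a = "independence_number V E"
  have "\<not> E x y" if x: "x \<in> V" "real (degree V E x) \<le> (real (card V) - real ?a) / 2"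
    and y: "y \<in> V" "real (degree V E y) \<le> (real (card V) - real ?a) / 2" for x y
  proof
    assume xy: "E x y"
    define Nx where "Nx = {z \<in> V. E x z}"
    define Ny where "Ny = {z \<in> V. E y z}"
    define A where "A = (Nx \<union> Ny) - {x}"
    define I where "I = V - A"
    have finN: "finite Nx" "finite Ny" using fin unfolding Nx_def Ny_def by auto
    have xNy: "x \<in> Ny" using xy sym x unfolding Ny_def by auto
    have AV: "A \<subseteq> V" unfolding A_def Nx_def Ny_def by auto
    have cA: "card A = card (Nx \<union> Ny) - 1"
      unfolding A_def using xNy finN by (simp add: card_Diff_singleton)
    have cU: "card (Nx \<union> Ny) \<le> card Nx + card Ny" by (rule card_Un_le)
    have pos: "card (Nx \<union> Ny) \<ge> 1"
      using xNy finN by (metis One_nat_def Suc_leI UnI2 card_gt_0_iff empty_iff finite_UnI)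
    have cI: "card I = card V - card A" unfolding I_def using AV fin
      by (simp add: card_Diff_subset finite_subset)
    have cAV: "card A \<le> card V" using AV fin by (simp add: card_mono)
    have indI: "independent_set V E I"
      unfolding independent_set_def
    proof (intro conjI ballI)
      show "I \<subseteq> V" unfolding I_def by auto
    next
      fix u v assume u: "u \<in> I" and v: "v \<in> I"
      show "\<not> E u v"
      proof
        assume uv: "E u v"
        show False
        proof (cases "u = x \<or> v = x")
          case True
          then show ?thesis
          proof
            assume "u = x" then have "v \<in> Nx" using uv inV unfolding Nx_def by auto
            moreover have "v \<noteq> x" using \<open>u = x\<close> uv irr by auto
            ultimately show False using v unfolding I_def A_def by auto
          next
            assume "v = x" then have "u \<in> Nx" using uv inV sym unfolding Nx_def by auto
            moreover have "u \<noteq> x" using \<open>v = x\<close> uv irr by auto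
            ultimately show False using u unfolding I_def A_def by auto
          qed
        next
          case False
          then have un: "u \<notin> Nx \<union> Ny" "v \<notin> Nx \<union> Ny" "u \<in> V" "v \<in> V"
            using u v unfolding I_def A_def by auto
          then have "\<not> E x u" "\<not> E x v" "\<not> E y u" "\<not> E y v"
            unfolding Nx_def Ny_def by auto
          moreover have "u \<noteq> y" "v \<noteq> y" using un xy sym x y unfolding Nx_def by auto
          moreover have "x \<noteq> y" "u \<noteq> v" using xy uv irr by auto
          ultimately have "distinct [x, y, u, v] \<and> E x y \<and> E u v \<and>
              \<not> E x u \<and> \<not> E x v \<and> \<not> E y u \<and> \<not> E y v"
            using xy uv False by auto
          then show False using assms(2) x(1) y(1) un(3,4)
            unfolding two_K2_free_def by blast
        qed
      qed
    qed
    have finS: "finite {card S | S. independent_set V E S}"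
    proof -
      have "{card S | S. independent_set V E S} \<subseteq> card ` Pow V"
        unfolding independent_set_def by auto
      then show ?thesis using fin by (meson finite_Pow_iff finite_imageI finite_subset)
    qed
    have ci: "card I \<le> ?a" unfolding independence_number_def
      using finS indI by (auto intro: Max_ge)
    have dx: "degree V E x = card Nx" and dy: "degree V E y = card Ny"
      unfolding degree_def Nx_def Ny_def by auto
    have "real (card Nx) + real (card Ny) + real ?a \<le> real (card V)"
      using x(2) y(2) unfolding dx dy by (simp add: field_simps)
    then have "card Nx + card Ny + ?a \<le> card V" by linarith
    then show False using ci cA cU pos cI cAV by linarith
  qed
  then show ?thesis unfolding independent_set_def by auto
qed

end
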